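(* Let $\mathbf{A}\in\mathbb{R}^{m\times n}$ have rows $\mathbf{a}_1^\mathsf{T},\dots,\mathbf{a}_m^\mathsf{T}$, let $\lambda>\max_l\|\mathbf{a}_l\|_\infty$, and consider $$\text{(P}_\lambda\text{)}\quad \min_{\boldsymbol{x}\in[-1,1]^n}\ \max_{l\in\{1,\dots,m\}}\mathbf{a}_l^\mathsf{T}\boldsymbol{x}-\lambda\|\boldsymbol{x}\|_1.$$ Then every local minimizer of (P$_\lambda$) belongs to $\{-1,1\}^n$. Conversely, every point of $\{-1,1\}^n$ is a local minimizer of (P$_\lambda$).
   Context: A local minimizer of (P$_\lambda$) is a point $\bar{\boldsymbol{x}}\in[-1,1]^n$ such that for some $\epsilon>0$ the objective at $\bar{\boldsymbol{x}}$ is no larger than at every $\boldsymbol{x}\in[-1,1]^n$ with $\|\boldsymbol{x}-\bar{\boldsymbol{x}}\|_2\le\epsilon$. *)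

theory Defs
  imports "HOL-Analysis.Analysis"
begin

definition box_set :: "(real ^ 'n) set" where
  "box_set = {x. \<forall>i. \<bar>x $ i\<bar> \<le> 1}"

definition sign_vecs :: "(real ^ 'n) set" where
  "sign_vecs = {x. \<forall>i. x $ i = 1 \<or> x $ i = -1}"

definition l1norm :: "real ^ 'n \<Rightarrow> real" where
  "l1norm x = (\<Sum>i\<in>UNIV. \<bar>x $ i\<bar>)"

definition linfnorm :: "real ^ 'n \<Rightarrow> real" where
  "linfnorm x = Max (range (\<lambda>i. \<bar>x $ i\<bar>))"

text \<open>Objective of (P_lambda); rows of A are a l, l ranging over finite nonempty type 'm.\<close>
definition P_obj :: "('m::finite \<Rightarrow> real ^ 'n) \<Rightarrow> real \<Rightarrow> real ^ 'n \<Rightarrow> real" where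
  "P_obj a lam x = Max (range (\<lambda>l. a l \<bullet> x)) - lam * l1norm x"

definition local_min_P :: "('m::finite \<Rightarrow> real ^ 'n) \<Rightarrow> real \<Rightarrow> real ^ 'n \<Rightarrow> bool" where
  "local_min_P a lam xb \<longleftrightarrow> xb \<in> box_set \<and>
     (\<exists>\<epsilon>>0. \<forall>x\<in>box_set. norm (x - xb) \<le> \<epsilon> \<longrightarrow> P_obj a lam xb \<le> P_obj a lam x)"

end

theory Submission
  imports Defs
begin

lemma Mx_ge: "(a::'m::finite \<Rightarrow> real ^ 'n) l \<bullet> x \<le> Max (range (\<lambda>l. a l \<bullet> x))"
  by (rule Max_ge) auto

lemma Mx_in: "\<exists>l. Max (range (\<lambda>l. (a::'m::finite \<Rightarrow> real ^ 'n) l \<bullet> x)) = a l \<bullet> x"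
proof -
  have "Max (range (\<lambda>l. a l \<bullet> x)) \<in> range (\<lambda>l. a l \<bullet> x)" by (rule Max_in) auto
  thus ?thesis unfolding image_iff by (metis (mono_tags))
qed

lemma comp_le_linf: "\<bar>v $ i\<bar> \<le> linfnorm v"
  unfolding linfnorm_def by (rule Max_ge) auto

lemma inner_bound:
  fixes v d :: "real ^ 'n"
  shows "\<bar>v \<bullet> d\<bar> \<le> linfnorm v * (\<Sum>i\<in>UNIV. \<bar>d $ i\<bar>)"
proof -
  have "\<bar>v \<bullet> d\<bar> = \<bar>\<Sum>i\<in>UNIV. v $ i * d $ i\<bar>" by (simp add: inner_vec_def)
  also have "\<dots> \<le> (\<Sum>i\<in>UNIV. \<bar>v $ i\<bar> * \<bar>d $ i\<bar>)"
    by (rule order_trans[OF sum_abs]) (simp add: abs_mult)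
  also have "\<dots> \<le> (\<Sum>i\<in>UNIV. linfnorm v * \<bar>d $ i\<bar>)"
    by (rule sum_mono) (simp add: mult_right_mono comp_le_linf)
  finally show ?thesis by (simp add: sum_distrib_left)
qed

theorem theorem4:
  fixes a :: "'m::finite \<Rightarrow> real ^ 'n" and lam :: real
  assumes "\<forall>l. lam > linfnorm (a l)"
  shows "{x. local_min_P a lam x} = sign_vecs"
proof (intro set_eqI iffI)
  fix x :: "real ^ 'n"
  assume "x \<in> {x. local_min_P a lam x}"
  then obtain e where box: "x \<in> box_set" and e: "e > 0"
    and lm: "\<forall>y\<in>box_set. norm (y - x) \<le> e \<longrightarrow> P_obj a lam x \<le> P_obj a lam y"
    unfolding local_min_P_def by auto
  show "x \<in> sign_vecs"
  proof (rule ccontr)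
    assume "x \<notin> sign_vecs"
    then obtain i where xi: "x $ i \<noteq> 1" "x $ i \<noteq> -1" unfolding sign_vecs_def by auto
    have xb: "\<bar>x $ j\<bar> \<le> 1" for j using box unfolding box_set_def by auto
    hence lt: "\<bar>x $ i\<bar> < 1" using xi[of] xb[of i] by (cases "x $ i \<ge> 0") (auto simp: abs_if)
    define s :: real where "s = (if x $ i \<ge> 0 then 1 else -1)"
    define t where "t = min e (1 - \<bar>x $ i\<bar>)"
    have t0: "t > 0" using e lt by (simp add: t_def)
    define d :: "real ^ 'n" where "d = (\<chi> j. if j = i then t * s else 0)"
    define y where "y = x + d"
    have ay: "\<bar>y $ j\<bar> = \<bar>x $ j\<bar> + (if j = i then t else 0)" for j
      using t0 by (auto simp: y_def d_def s_def)
    have yb: "y \<in> box_set" unfolding box_set_def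
    proof (intro CollectI allI)
      fix j show "\<bar>y $ j\<bar> \<le> 1" using ay[of j] xb[of j] by (auto simp: t_def)
    qed
    have sd: "(\<Sum>j\<in>UNIV. \<bar>d $ j\<bar>) = t" using t0
      by (simp add: d_def s_def abs_mult if_distrib[of abs] cong: if_cong)
    have "norm (y - x) \<le> e"
      using norm_le_l1_cart[of d] sd by (simp add: y_def t_def)
    hence le: "P_obj a lam x \<le> P_obj a lam y" using lm yb by auto
    have l1: "l1norm y = l1norm x + t"
      unfolding l1norm_def ay by (simp add: sum.distrib)
    obtain l where l: "Max (range (\<lambda>l. a l \<bullet> y)) = a l \<bullet> y" using Mx_in by blast
    have "a l \<bullet> d = a l $ i * (t * s)"
      by (simp add: d_def inner_vec_def if_distrib[of "\<lambda>z. _ * z"] cong: if_cong)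
    also have "\<dots> \<le> \<bar>a l $ i\<bar> * t" using t0
      by (auto simp add: s_def abs_mult abs_ge_self abs_ge_minus_self)
    also have "\<dots> < lam * t"
      using t0 comp_le_linf[of "a l" i] assms by (intro mult_strict_right_mono) (smt (verit), simp)
    finally have ad: "a l \<bullet> d < lam * t" .
    have mg: "a l \<bullet> x \<le> Max (range (\<lambda>l. a l \<bullet> x))" by (rule Mx_ge)
    have "Max (range (\<lambda>l. a l \<bullet> y)) < Max (range (\<lambda>l. a l \<bullet> x)) + lam * t"
      proof -
      have "a l \<bullet> y = a l \<bullet> x + a l \<bullet> d" by (simp add: y_def inner_add_right)
      thus ?thesis using l ad mg by linarith
    qed
    hence "P_obj a lam y < P_obj a lam x"
      unfolding P_obj_def l1 by (simp add: algebra_simps)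
    with le show False by simp
  qed
next
  fix x :: "real ^ 'n"
  assume xs: "x \<in> sign_vecs"
  hence xv: "x $ j = 1 \<or> x $ j = -1" for j unfolding sign_vecs_def by auto
  have box: "x \<in> box_set" unfolding box_set_def
  proof (intro CollectI allI)
    fix j show "\<bar>x $ j\<bar> \<le> 1" using xv[of j] by auto
  qed
  have "\<forall>y\<in>box_set. norm (y - x) \<le> 1 \<longrightarrow> P_obj a lam x \<le> P_obj a lam y"
  proof (intro ballI impI)
    fix y :: "real ^ 'n"
    assume yb: "y \<in> box_set" and n: "norm (y - x) \<le> 1"
    have yj: "\<bar>y $ j\<bar> \<le> 1" for j using yb unfolding box_set_def by auto
    have dj: "\<bar>y $ j - x $ j\<bar> \<le> 1" for j
      using component_le_norm_cart[of "y - x" j] n by simp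
    have key: "\<bar>y $ j - x $ j\<bar> = 1 - \<bar>y $ j\<bar>" for j
      using xv[of j] dj[of j] yj[of j] by auto
    obtain l where l: "Max (range (\<lambda>l. a l \<bullet> x)) = a l \<bullet> x" using Mx_in by blast
    have ib: "\<bar>a l \<bullet> (y - x)\<bar> \<le> linfnorm (a l) * (\<Sum>j\<in>UNIV. \<bar>(y - x) $ j\<bar>)"
      by (rule inner_bound)
    have S0: "(\<Sum>j\<in>UNIV. \<bar>(y - x) $ j\<bar>) \<ge> 0" by (simp add: sum_nonneg)
    have "linfnorm (a l) * (\<Sum>j\<in>UNIV. \<bar>(y - x) $ j\<bar>) \<le> lam * (\<Sum>j\<in>UNIV. \<bar>(y - x) $ j\<bar>)"
      using assms S0 by (intro mult_right_mono) (auto simp: less_imp_le)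
    moreover have Seq: "(\<Sum>j\<in>UNIV. \<bar>(y - x) $ j\<bar>) = l1norm x - l1norm y"
      using key xv by (simp add: l1norm_def sum_subtractf[symmetric]) (rule sum.cong, simp, metis abs_minus_cancel abs_one)
    ultimately have "a l \<bullet> x - lam * (l1norm x - l1norm y) \<le> a l \<bullet> y"
      using ib unfolding inner_diff_right by (smt (verit))
    moreover have "a l \<bullet> y \<le> Max (range (\<lambda>l. a l \<bullet> y))" by (rule Mx_ge)
    ultimately show "P_obj a lam x \<le> P_obj a lam y"
      unfolding P_obj_def l by (simp add: right_diff_distrib; linarith)
  qed
  thus "x \<in> {x. local_min_P a lam x}" using box unfolding local_min_P_def
    by (auto intro!: exI[of _ 1])
qed

end
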